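(* Let $N_1$ and $N_2$ be tree-child phylogenetic networks labeled in the same finite set $S$, each satisfying that no two parents of a hybrid node are connected by a path. Then $N_1\cong N_2$ if and only if $C(N_1)=C(N_2)$.
   Context: A DAG is labeled in $S$ if its leaves (out-degree 0) are bijectively labeled by $S$; isomorphism $\cong$ means isomorphism of directed graphs preserving leaf labels. A tree node has in-degree at most 1; a hybrid node has in-degree greater than 1; a tree child is a child that is a tree node. A tree-child phylogenetic network is a rooted DAG labeled in $S$ in which every non-leaf node has at least one tree child, no tree node has out-degree 1, and every hybrid node has out-degree exactly 1. "No two parents of a hybrid node are connected by a path" means: if $u_1,u_2$ are parents of a hybrid node, there is no path $u_1\rightsquigarrow u_2$ nor $u_2\rightsquigarrow u_1$. For a node $v$, $C(v)$ is the set of leaves that are descendants of $v$, and $C(N)=\{C(v)\mid v\text{ a node of }N\}$. *)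

theory Defs
  imports Main
begin

text \<open>A directed graph is given by a node set V and an edge relation E (pairs (u,w) = edge u -> w).\<close>

definition indeg :: "'v set \<Rightarrow> ('v \<times> 'v) set \<Rightarrow> 'v \<Rightarrow> nat" where
  "indeg V E v = card {u \<in> V. (u, v) \<in> E}"

definition outdeg :: "'v set \<Rightarrow> ('v \<times> 'v) set \<Rightarrow> 'v \<Rightarrow> nat" where
  "outdeg V E v = card {w \<in> V. (v, w) \<in> E}"

definition leaves :: "'v set \<Rightarrow> ('v \<times> 'v) set \<Rightarrow> 'v set" where
  "leaves V E = {v \<in> V. outdeg V E v = 0}"

definition tree_node :: "'v set \<Rightarrow> ('v \<times> 'v) set \<Rightarrow> 'v \<Rightarrow> bool" where
  "tree_node V E v \<longleftrightarrow> indeg V E v \<le> 1"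

definition hybrid_node :: "'v set \<Rightarrow> ('v \<times> 'v) set \<Rightarrow> 'v \<Rightarrow> bool" where
  "hybrid_node V E v \<longleftrightarrow> indeg V E v > 1"

definition rooted_dag :: "'v set \<Rightarrow> ('v \<times> 'v) set \<Rightarrow> bool" where
  "rooted_dag V E \<longleftrightarrow> finite V \<and> E \<subseteq> V \<times> V \<and> acyclic E \<and>
     (\<exists>r \<in> V. \<forall>v \<in> V. (r, v) \<in> E\<^sup>*)"

definition labeled_in :: "'v set \<Rightarrow> ('v \<times> 'v) set \<Rightarrow> ('v \<Rightarrow> 'l) \<Rightarrow> 'l set \<Rightarrow> bool" where
  "labeled_in V E lab S \<longleftrightarrow> bij_betw lab (leaves V E) S"

definition tree_child_network ::
  "'v set \<Rightarrow> ('v \<times> 'v) set \<Rightarrow> ('v \<Rightarrow> 'l) \<Rightarrow> 'l set \<Rightarrow> bool" where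
  "tree_child_network V E lab S \<longleftrightarrow>
     rooted_dag V E \<and> labeled_in V E lab S \<and>
     (\<forall>v \<in> V. v \<notin> leaves V E \<longrightarrow> (\<exists>w \<in> V. (v, w) \<in> E \<and> tree_node V E w)) \<and>
     (\<forall>v \<in> V. tree_node V E v \<longrightarrow> outdeg V E v \<noteq> 1) \<and>
     (\<forall>v \<in> V. hybrid_node V E v \<longrightarrow> outdeg V E v = 1)"

definition no_hybrid_parent_path :: "'v set \<Rightarrow> ('v \<times> 'v) set \<Rightarrow> bool" where
  "no_hybrid_parent_path V E \<longleftrightarrow>
     (\<forall>h \<in> V. hybrid_node V E h \<longrightarrow>
        (\<forall>u1 u2. (u1, h) \<in> E \<longrightarrow> (u2, h) \<in> E \<longrightarrow> u1 \<noteq> u2 \<longrightarrow> (u1, u2) \<notin> E\<^sup>+))"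

definition cluster :: "'v set \<Rightarrow> ('v \<times> 'v) set \<Rightarrow> ('v \<Rightarrow> 'l) \<Rightarrow> 'v \<Rightarrow> 'l set" where
  "cluster V E lab v = lab ` {x \<in> leaves V E. (v, x) \<in> E\<^sup>*}"

definition clusters :: "'v set \<Rightarrow> ('v \<times> 'v) set \<Rightarrow> ('v \<Rightarrow> 'l) \<Rightarrow> 'l set set" where
  "clusters V E lab = cluster V E lab ` V"

definition labeled_iso ::
  "'v set \<Rightarrow> ('v \<times> 'v) set \<Rightarrow> ('v \<Rightarrow> 'l) \<Rightarrow> 'w set \<Rightarrow> ('w \<times> 'w) set \<Rightarrow> ('w \<Rightarrow> 'l) \<Rightarrow> bool" where
  "labeled_iso V1 E1 lab1 V2 E2 lab2 \<longleftrightarrow>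
     (\<exists>f. bij_betw f V1 V2 \<and>
          (\<forall>u \<in> V1. \<forall>w \<in> V1. (u, w) \<in> E1 \<longleftrightarrow> (f u, f w) \<in> E2) \<and>
          (\<forall>x \<in> leaves V1 E1. lab2 (f x) = lab1 x))"

end

theory Submission imports Defs begin

lemma leaf_char: "finite V \<Longrightarrow> v \<in> leaves V E \<longleftrightarrow> v \<in> V \<and> (\<forall>w\<in>V. (v,w) \<notin> E)"
  unfolding leaves_def outdeg_def by auto

definition minsup :: "'a set set \<Rightarrow> 'a set \<Rightarrow> 'a set set" where
  "minsup K A = {B\<in>K. A \<subset> B \<and> \<not>(\<exists>B'\<in>K. A \<subset> B' \<and> B' \<subset> B)}"

lemma minsup_eq: assumes a1: "\<And>x. x\<in>P \<Longrightarrow> x\<in>K \<and> A \<subset> x"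
  and a2: "\<And>B. B\<in>K \<Longrightarrow> A\<subset>B \<Longrightarrow> (\<exists>x\<in>P. x \<subseteq> B)"
  and a3: "\<And>x y. x\<in>P \<Longrightarrow> y\<in>P \<Longrightarrow> x \<subseteq> y \<Longrightarrow> x = y" shows "minsup K A = P"
proof
  show "minsup K A \<subseteq> P"
  proof
    fix B assume B: "B \<in> minsup K A"
    have BK: "B\<in>K" "A \<subset> B" using B unfolding minsup_def by auto
    have nm: "\<not>(\<exists>B'\<in>K. A \<subset> B' \<and> B' \<subset> B)" using B unfolding minsup_def by auto
    obtain x where x: "x\<in>P" "x \<subseteq> B" using a2[OF BK] by blast
    have xK: "x \<in> K" "A \<subset> x" using a1[OF x(1)] by auto
    have "\<not> x \<subset> B" using nm xK by blast
    then show "B \<in> P" using x by (metis psubsetI)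
  qed
next
  show "P \<subseteq> minsup K A"
  proof
    fix x assume x: "x\<in>P"
    have "\<not>(\<exists>B'\<in>K. A \<subset> B' \<and> B' \<subset> x)"
    proof
      assume "\<exists>B'\<in>K. A \<subset> B' \<and> B' \<subset> x"
      then obtain B' where B': "B'\<in>K" "A \<subset> B'" "B' \<subset> x" by blast
      obtain y where y: "y\<in>P" "y \<subseteq> B'" using a2[OF B'(1,2)] by blast
      have "y \<subseteq> x" using y B' by blast
      then have "y = x" using a3 x y(1) by blast
      then show False using y B' by blast
    qed
    then show "x \<in> minsup K A" using a1[OF x] unfolding minsup_def by blast
  qed
qed

definition two :: "'a set \<Rightarrow> bool" where "two M \<longleftrightarrow> (\<exists>a\<in>M. \<exists>b\<in>M. a \<noteq> b)"

definition Img :: "'a set set \<Rightarrow> ('a set \<times> bool) set" where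
  "Img K = {(A,True)|A. A\<in>K} \<union> {(A,False)|A. A\<in>K \<and> two (minsup K A)}"

definition Rel :: "'a set set \<Rightarrow> ('a set \<times> bool) \<Rightarrow> ('a set \<times> bool) \<Rightarrow> bool" where
  "Rel K x y \<longleftrightarrow> (snd x \<and> snd y \<and> minsup K (fst y) = {fst x}) \<or>
     (snd x \<and> \<not> snd y \<and> fst x \<in> minsup K (fst y)) \<or> (\<not> snd x \<and> snd y \<and> fst x = fst y)"

locale tcn =
  fixes V :: "'v set" and E :: "('v \<times> 'v) set" and lab :: "'v \<Rightarrow> 'l" and S :: "'l set"
  assumes tcn: "tree_child_network V E lab S" and nhp: "no_hybrid_parent_path V E"
begin

abbreviation C where "C \<equiv> cluster V E lab"
abbreviation tr where "tr \<equiv> tree_node V E"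

lemma finV: "finite V" and EV: "E \<subseteq> V \<times> V" and acyc: "acyclic E"
  and root: "\<exists>r\<in>V. \<forall>v\<in>V. (r,v)\<in>E\<^sup>*"
  using tcn unfolding tree_child_network_def rooted_dag_def by auto

lemma tc_child: "v\<in>V \<Longrightarrow> v \<notin> leaves V E \<Longrightarrow> \<exists>w\<in>V. (v,w)\<in>E \<and> tr w"
  using tcn unfolding tree_child_network_def apply (elim conjE) by blast
lemma tc_tree: "v\<in>V \<Longrightarrow> tr v \<Longrightarrow> outdeg V E v \<noteq> 1"
  using tcn unfolding tree_child_network_def apply (elim conjE) by blast
lemma tc_hyb: "v\<in>V \<Longrightarrow> hybrid_node V E v \<Longrightarrow> outdeg V E v = 1"
  using tcn unfolding tree_child_network_def apply (elim conjE) by blast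

lemma Ein: "(u,v)\<in>E \<Longrightarrow> u\<in>V \<and> v\<in>V" using EV by auto

lemma rtr_in: "(u,v)\<in>E\<^sup>* \<Longrightarrow> u \<in> V \<Longrightarrow> v\<in>V"
  by (induction rule: rtrancl_induct) (auto dest: Ein)

lemma noloop: "(u,u) \<notin> E\<^sup>+" using acyc unfolding acyclic_def by auto

lemma leaf_iff: "v \<in> leaves V E \<longleftrightarrow> v \<in> V \<and> (\<forall>w. (v,w) \<notin> E)"
  using leaf_char[OF finV] Ein by blast

lemma par_unique: assumes "tr w" "(p,w)\<in>E" "(q,w)\<in>E" shows "p = q"
proof -
  have f: "finite {u\<in>V. (u,w)\<in>E}" using finV by auto
  have "card {u\<in>V. (u,w)\<in>E} \<le> Suc 0" using assms(1) unfolding tree_node_def indeg_def by simp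
  then show ?thesis using card_le_Suc0_iff_eq[OF f] assms Ein by blast
qed

lemma hyb_parents: assumes "\<not> tr h" shows "\<exists>p q. (p,h)\<in>E \<and> (q,h)\<in>E \<and> p \<noteq> q"
proof (rule ccontr)
  assume a: "\<not> ?thesis"
  have f: "finite {u\<in>V. (u,h)\<in>E}" using finV by auto
  have "card {u\<in>V. (u,h)\<in>E} \<le> Suc 0" using card_le_Suc0_iff_eq[OF f] a by blast
  then show False using assms unfolding tree_node_def indeg_def by simp
qed

lemma hyb_child: assumes "\<not> tr h" "h \<in> V"
  shows "\<exists>c. (h,c)\<in>E \<and> tr c \<and> (\<forall>c'. (h,c')\<in>E \<longrightarrow> c' = c)"
proof -
  have hy: "hybrid_node V E h" using assms(1) unfolding hybrid_node_def tree_node_def by simp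
  have o: "outdeg V E h = 1" using tc_hyb assms(2) hy by blast
  have "card {w\<in>V. (h,w)\<in>E} = Suc 0" using o unfolding outdeg_def by simp
  then have "\<exists>c. {w\<in>V. (h,w)\<in>E} = {c}" by (simp only: card_1_singleton_iff)
  then obtain c where c: "{w\<in>V. (h,w)\<in>E} = {c}" by (elim exE)
  have "h \<notin> leaves V E" using o assms(2) unfolding leaves_def by simp
  then obtain w where w: "w\<in>V" "(h,w)\<in>E" "tr w" using tc_child assms(2) by blast
  have "w = c" using c w by auto
  moreover have "\<forall>c'. (h,c')\<in>E \<longrightarrow> c' = c" using c Ein by blast
  ultimately show ?thesis using w by blast
qed

lemma nhp': "(p,h)\<in>E \<Longrightarrow> (q,h)\<in>E \<Longrightarrow> \<not> tr h \<Longrightarrow> p\<noteq>q \<Longrightarrow> (p,q) \<notin> E\<^sup>+"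
  using nhp Ein unfolding no_hybrid_parent_path_def hybrid_node_def tree_node_def by fastforce

lemma hyb_parent_tree: assumes "(p,h)\<in>E" "\<not> tr h" shows "tr p"
proof (rule ccontr)
  assume "\<not> tr p"
  then obtain c where "(p,c)\<in>E" "tr c" "\<forall>c'. (p,c')\<in>E \<longrightarrow> c' = c" using hyb_child Ein assms by blast
  then show False using assms by auto
qed

lemma leaf_tree: assumes "x \<in> leaves V E" shows "tr x"
  using hyb_child[of x] assms leaf_iff by blast

lemma wfE: "wf (E\<inverse>)"
proof -
  have "finite E" using finite_subset[OF EV] finV by auto
  then show ?thesis using finite_acyclic_wf_converse acyc by blast
qed

lemma tleaf: "v\<in>V \<Longrightarrow> \<exists>x\<in>leaves V E. (v,x)\<in>E\<^sup>* \<and> (\<forall>u. (u,x)\<in>E\<^sup>* \<longrightarrow> (u,v)\<in>E\<^sup>* \<or> (v,u)\<in>E\<^sup>+)"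
proof (induction v rule: wf_induct[OF wfE])
  case (1 v)
  show ?case
  proof (cases "v \<in> leaves V E")
    case True then show ?thesis by blast
  next
    case False
    then obtain w where w: "w\<in>V" "(v,w)\<in>E" "tr w" using tc_child 1(2) by blast
    then obtain x where x: "x\<in>leaves V E" "(w,x)\<in>E\<^sup>*" "\<forall>u. (u,x)\<in>E\<^sup>* \<longrightarrow> (u,w)\<in>E\<^sup>* \<or> (w,u)\<in>E\<^sup>+"
      using 1(1) by blast
    have "(v,x)\<in>E\<^sup>*" using w x by auto
    moreover have "(u,v)\<in>E\<^sup>* \<or> (v,u)\<in>E\<^sup>+" if "(u,x)\<in>E\<^sup>*" for u
    proof -
      from x(3) that have "(u,w)\<in>E\<^sup>* \<or> (w,u)\<in>E\<^sup>+" by blast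
      then show ?thesis
      proof
        assume "(w,u)\<in>E\<^sup>+" then show ?thesis using w by (meson trancl_into_trancl2)
      next
        assume "(u,w)\<in>E\<^sup>*"
        then show ?thesis
        proof (cases rule: rtranclE)
          case base then show ?thesis using w by auto
        next
          case (step p) then show ?thesis using par_unique[OF w(3) w(2)] by auto
        qed
      qed
    qed
    ultimately show ?thesis using x(1) by blast
  qed
qed

lemma C_mono: "(u,v)\<in>E\<^sup>* \<Longrightarrow> C v \<subseteq> C u"
  unfolding cluster_def by (auto intro: rtrancl_trans)

lemma inj_lab: "inj_on lab (leaves V E)"
  using tcn unfolding tree_child_network_def labeled_in_def bij_betw_def by blast

lemma lab_in_C: "x \<in> leaves V E \<Longrightarrow> lab x \<in> C v \<longleftrightarrow> (v,x)\<in>E\<^sup>*"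
  unfolding cluster_def using inj_lab by (auto dest: inj_onD)

lemma C_leaf: assumes "x \<in> leaves V E" shows "C x = {lab x}"
proof -
  have "(x,y)\<in>E\<^sup>* \<Longrightarrow> y = x" for y
    by (erule converse_rtranclE) (use assms leaf_iff in auto)
  then show ?thesis unfolding cluster_def using assms by auto
qed

lemma KL2: assumes "v\<in>V" "C v \<subseteq> C u" shows "(u,v)\<in>E\<^sup>* \<or> (v,u)\<in>E\<^sup>+"
proof -
  obtain x where x: "x\<in>leaves V E" "(v,x)\<in>E\<^sup>*" "\<forall>u. (u,x)\<in>E\<^sup>* \<longrightarrow> (u,v)\<in>E\<^sup>* \<or> (v,u)\<in>E\<^sup>+"
    using tleaf assms(1) by blast
  have "lab x \<in> C u" using x assms lab_in_C by blast
  then show ?thesis using x lab_in_C by blast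
qed


lemma C_hyb: assumes "\<not> tr h" "(h,c)\<in>E" shows "C c = C h"
proof
  show "C c \<subseteq> C h" using C_mono assms(2) by blast
next
  obtain c0 where c0: "(h,c0)\<in>E" "\<forall>c'. (h,c')\<in>E \<longrightarrow> c' = c0" using hyb_child assms Ein by blast
  have cc: "c = c0" using c0 assms by blast
  show "C h \<subseteq> C c"
  proof
    fix l assume "l \<in> C h"
    then obtain x where x: "x \<in> leaves V E" "(h,x)\<in>E\<^sup>*" "l = lab x" unfolding cluster_def by blast
    from x(2) have "(c,x)\<in>E\<^sup>*"
    proof (cases rule: converse_rtranclE)
      case base then show ?thesis using x(1) assms(2) leaf_iff by blast
    next
      case (step z) then show ?thesis using c0 cc by blast
    qed
    then show "l \<in> C c" using x unfolding cluster_def by blast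
  qed
qed

lemma G: "u \<in> V \<Longrightarrow> (\<forall>v. (u,v)\<in>E\<^sup>+ \<longrightarrow> C u \<subseteq> C v \<longrightarrow> tr v \<longrightarrow> \<not> tr u \<and> (u,v)\<in>E)"
proof (induction u rule: wf_induct[OF wfE])
  case (1 u)
  show ?case
  proof (intro allI impI)
    fix v assume uv: "(u,v)\<in>E\<^sup>+" and Cuv: "C u \<subseteq> C v" and tv: "tr v"
    obtain y0 where "(u,y0)\<in>E" using uv by (meson converse_tranclE)
    then have "u \<notin> leaves V E" using leaf_iff by blast
    then obtain t where t: "t\<in>V" "(u,t)\<in>E" "tr t" using tc_child 1(2) by blast
    obtain y where y: "y\<in>leaves V E" "(t,y)\<in>E\<^sup>*" "\<forall>u. (u,y)\<in>E\<^sup>* \<longrightarrow> (u,t)\<in>E\<^sup>* \<or> (t,u)\<in>E\<^sup>+"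
      using tleaf t(1) by blast
    have Ctu: "C t \<subseteq> C u" using C_mono t(2) by blast
    have "lab y \<in> C t" using y lab_in_C by blast
    then have "(v,y)\<in>E\<^sup>*" using Ctu Cuv lab_in_C y(1) by blast
    then have "(v,t)\<in>E\<^sup>* \<or> (t,v)\<in>E\<^sup>+" using y(3) by blast
    then have vt: "v = t"
    proof
      assume "(t,v)\<in>E\<^sup>+"
      then have "\<not> tr t" using 1(1) t Ctu Cuv tv by blast
      then show ?thesis using t by blast
    next
      assume "(v,t)\<in>E\<^sup>*"
      then show ?thesis
      proof (cases rule: rtranclE)
        case base then show ?thesis by simp
      next
        case (step p)
        then have "p = u" using par_unique t by blast
        then have "(u,u)\<in>E\<^sup>+" using step uv by (meson rtrancl_into_trancl2 trancl_rtrancl_trancl)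
        then show ?thesis using noloop by blast
      qed
    qed
    have uvE: "(u,v)\<in>E" using vt t by simp
    have "\<not> tr u"
    proof
      assume tu: "tr u"
      have "outdeg V E u \<noteq> 1" using tc_tree 1(2) tu by blast
      moreover have vin: "v \<in> {w\<in>V. (u,w)\<in>E}" using uvE Ein by blast
      ultimately have "{w\<in>V. (u,w)\<in>E} \<noteq> {v}" unfolding outdeg_def by auto
      then obtain w where w: "w\<in>V" "(u,w)\<in>E" "w \<noteq> v" using vin by blast
      obtain z where z: "z\<in>leaves V E" "(w,z)\<in>E\<^sup>*" "\<forall>u. (u,z)\<in>E\<^sup>* \<longrightarrow> (u,w)\<in>E\<^sup>* \<or> (w,u)\<in>E\<^sup>+"
        using tleaf w(1) by blast
      have "lab z \<in> C w" using z lab_in_C by blast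
      moreover have "C w \<subseteq> C u" using C_mono w(2) by blast
      ultimately have "(v,z)\<in>E\<^sup>*" using Cuv lab_in_C z(1) by blast
      then have "(v,w)\<in>E\<^sup>* \<or> (w,v)\<in>E\<^sup>+" using z(3) by blast
      then show False
      proof
        assume "(w,v)\<in>E\<^sup>+"
        then obtain p where p: "(w,p)\<in>E\<^sup>*" "(p,v)\<in>E" by (meson tranclD2)
        then have "p = u" using par_unique tv uvE by blast
        then have "(u,u)\<in>E\<^sup>+" using p w(2) by (meson rtrancl_into_trancl2)
        then show False using noloop by blast
      next
        assume "(v,w)\<in>E\<^sup>*"
        then show False
        proof (cases rule: rtranclE)
          case base then show ?thesis using w by simp
        next
          case (step p)
          have up: "(u,p)\<in>E\<^sup>+" using uvE step(1) by (meson rtrancl_into_trancl2)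
          show ?thesis
          proof (cases "tr w")
            case True
            then have "p = u" using par_unique step(2) w(2) by blast
            then show ?thesis using up noloop by blast
          next
            case False
            have "p \<noteq> u" using up noloop by blast
            then show ?thesis using nhp'[OF w(2) step(2) False] up by blast
          qed
        qed
      qed
    qed
    then show "\<not> tr u \<and> (u,v)\<in>E" using uvE by blast
  qed
qed

lemma R2: assumes "u\<in>V" "v\<in>V" "tr u" "tr v" "C v \<subseteq> C u" shows "(u,v)\<in>E\<^sup>*"
proof -
  have "(u,v)\<in>E\<^sup>* \<or> (v,u)\<in>E\<^sup>+" using KL2 assms by blast
  then show ?thesis using G[OF assms(2)] assms by blast
qed

lemma R1: assumes "u\<in>V" "v\<in>V" "tr u" "tr v" "C u = C v" shows "u = v"
proof -
  have "(u,v)\<in>E\<^sup>*" using R2 assms by blast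
  then show ?thesis
  proof (cases rule: rtranclE)
    case base then show ?thesis .
  next
    case (step p)
    then have "(u,v)\<in>E\<^sup>+" by (meson rtrancl_into_trancl1)
    then show ?thesis using G[OF assms(1)] assms by blast
  qed
qed


abbreviation K where "K \<equiv> clusters V E lab"

lemma rep: assumes "w0\<in>V" shows "\<exists>w\<in>V. tr w \<and> C w = C w0"
proof (cases "tr w0")
  case False
  then obtain c where "(w0,c)\<in>E" "tr c" using hyb_child assms by blast
  then show ?thesis using C_hyb[OF False] Ein by blast
qed (use assms in blast)

lemma Ssup: assumes "t\<in>V" "tr t" "B \<in> K" "C t \<subset> B"
  shows "\<exists>w\<in>V. tr w \<and> B = C w \<and> (w,t)\<in>E\<^sup>+"
proof -
  obtain w0 where "w0\<in>V" "B = C w0" using assms(3) unfolding clusters_def by blast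
  then obtain w where w: "w\<in>V" "tr w" "B = C w" using rep by metis
  then have "(w,t)\<in>E\<^sup>*" using R2 assms by blast
  moreover have "w \<noteq> t" using w(3) assms(4) by auto
  ultimately have "(w,t)\<in>E\<^sup>+" by (meson rtranclD)
  then show ?thesis using w by blast
qed

lemma CK: "v \<in> V \<Longrightarrow> C v \<in> K" unfolding clusters_def by blast

lemma M0: assumes "t\<in>V" "\<forall>p. (p,t)\<notin>E" shows "minsup K (C t) = {}"
proof -
  obtain r where r: "r\<in>V" "\<forall>v\<in>V. (r,v)\<in>E\<^sup>*" using root by blast
  have "(r,t)\<in>E\<^sup>*" using r assms by blast
  then have "r = t" using assms(2) by (cases rule: rtranclE) auto
  then have all: "\<forall>B\<in>K. B \<subseteq> C t" using r C_mono unfolding clusters_def by blast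
  have "B \<notin> minsup K (C t)" for B
  proof
    assume "B \<in> minsup K (C t)"
    then have "B\<in>K" "C t \<subset> B" by (simp_all add: minsup_def)
    then show False using all by blast
  qed
  then show ?thesis by blast
qed

lemma M1: assumes "tr t" "(p,t)\<in>E" "tr p" shows "minsup K (C t) = {C p}"
proof -
  have tV: "t\<in>V" and pV: "p\<in>V" using assms Ein by auto
  have sub: "C t \<subset> C p"
  proof -
    have "C t \<subseteq> C p" using C_mono assms(2) by blast
    moreover have "p \<noteq> t" using assms(2) noloop by blast
    then have "C t \<noteq> C p" using R1 tV pV assms by metis
    ultimately show ?thesis by (rule psubsetI)
  qed
  have key: "\<forall>B\<in>K. C t \<subset> B \<longrightarrow> C p \<subseteq> B"
  proof (intro ballI impI)
    fix B assume B: "B\<in>K" "C t \<subset> B"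
    obtain w where w: "w\<in>V" "B = C w" "(w,t)\<in>E\<^sup>+" using Ssup[OF tV assms(1) B] by blast
    then obtain q where "(w,q)\<in>E\<^sup>*" "(q,t)\<in>E" by (meson tranclD2)
    then show "C p \<subseteq> B" using par_unique assms w C_mono by metis
  qed
  show ?thesis
  proof (rule minsup_eq)
    fix x assume "x \<in> {C p}" then show "x\<in>K \<and> C t \<subset> x" using sub CK[OF pV] by simp
  next
    fix B assume "B\<in>K" "C t \<subset> B" then show "\<exists>x\<in>{C p}. x \<subseteq> B" using key by simp
  next
    fix x y assume "x\<in>{C p}" "y\<in>{C p}" then show "x = y" by simp
  qed
qed

lemma M2: assumes "tr t" "(h,t)\<in>E" "\<not> tr h"
  shows "minsup K (C t) = C ` {p. (p,h)\<in>E}" and "two (minsup K (C t))"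
proof -
  have tV: "t\<in>V" using assms Ein by auto
  have par: "tr p \<and> p \<in> V \<and> C t \<subset> C p" if "(p,h)\<in>E" for p
  proof -
    have tp: "tr p" using hyb_parent_tree that assms by blast
    have pV: "p\<in>V" using that Ein by blast
    have "(p,t)\<in>E\<^sup>*" using that assms(2) by auto
    then have "C t \<subseteq> C p" using C_mono by blast
    moreover have "p \<noteq> t"
    proof
      assume "p = t" then have "(t,t)\<in>E\<^sup>+" using that assms(2) by auto
      then show False using noloop by blast
    qed
    then have "C t \<noteq> C p" using R1 tV pV assms(1) tp by metis
    ultimately have "C t \<subset> C p" by (rule psubsetI)
    then show ?thesis using tp pV by simp
  qed
  have key: "\<forall>B\<in>K. C t \<subset> B \<longrightarrow> (\<exists>p. (p,h)\<in>E \<and> C p \<subseteq> B)"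
  proof (intro ballI impI)
    fix B assume B: "B\<in>K" "C t \<subset> B"
    obtain w where w: "w\<in>V" "tr w" "B = C w" "(w,t)\<in>E\<^sup>+" using Ssup[OF tV assms(1) B] by blast
    then obtain q where q: "(w,q)\<in>E\<^sup>*" "(q,t)\<in>E" by (meson tranclD2)
    then have "q = h" using par_unique assms by blast
    then have "(w,h)\<in>E\<^sup>*" using q by simp
    moreover have "w \<noteq> h" using w assms by blast
    ultimately obtain p where "(w,p)\<in>E\<^sup>*" "(p,h)\<in>E" by (meson rtranclE)
    then show "\<exists>p. (p,h)\<in>E \<and> C p \<subseteq> B" using C_mono w by blast
  qed
  have inc: "p = q" if "(p,h)\<in>E" "(q,h)\<in>E" "C p \<subseteq> C q" for p q
  proof (rule ccontr)
    assume ne: "p \<noteq> q"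
    have pp: "tr p" "p\<in>V" using par[OF that(1)] by simp_all
    have qq: "tr q" "q\<in>V" using par[OF that(2)] by simp_all
    have "(q,p)\<in>E\<^sup>*" using R2[OF qq(2) pp(2) qq(1) pp(1) that(3)] .
    then have "(q,p)\<in>E\<^sup>+" using ne by (metis rtranclD)
    then show False using nhp'[OF that(2) that(1) assms(3)] ne by blast
  qed
  show "minsup K (C t) = C ` {p. (p,h)\<in>E}"
  proof (rule minsup_eq)
    fix x assume "x \<in> C ` {p. (p,h)\<in>E}"
    then obtain p where p: "(p,h)\<in>E" "x = C p" by blast
    then show "x \<in> K \<and> C t \<subset> x" using par[OF p(1)] CK by simp
  next
    fix B assume B: "B\<in>K" "C t \<subset> B"
    obtain p where p: "(p,h)\<in>E" "C p \<subseteq> B" using key B by blast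
    have "C p \<in> C ` {p. (p,h)\<in>E}" using p(1) by simp
    then show "\<exists>x\<in>C ` {p. (p,h)\<in>E}. x \<subseteq> B" using p(2) by blast
  next
    fix x y assume "x \<in> C ` {p. (p,h)\<in>E}" "y \<in> C ` {p. (p,h)\<in>E}" "x \<subseteq> y"
    then obtain p q where "(p,h)\<in>E" "(q,h)\<in>E" "x = C p" "y = C q" "C p \<subseteq> C q" by blast
    then show "x = y" using inc by metis
  qed
  obtain p q where pq: "(p,h)\<in>E" "(q,h)\<in>E" "p \<noteq> q" using hyb_parents assms(3) by blast
  then have ne: "C p \<noteq> C q" using inc by (metis order_refl)
  have "C p \<in> minsup K (C t)" "C q \<in> minsup K (C t)"
    using pq \<open>minsup K (C t) = C ` {p. (p,h)\<in>E}\<close> by simp_all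
  then show "two (minsup K (C t))" unfolding two_def using ne by blast
qed


lemma g_inj: "inj_on (\<lambda>v. (C v, tr v)) V"
proof (rule inj_onI)
  fix u v assume uV: "u\<in>V" and vV: "v\<in>V" and eq: "(C u, tr u) = (C v, tr v)"
  then have Ce: "C u = C v" and te: "tr u = tr v" by simp_all
  show "u = v"
  proof (cases "tr u")
    case True then show ?thesis using R1[OF uV vV] Ce te by simp
  next
    case False
    obtain cu where cu: "(u,cu)\<in>E" "tr cu" using hyb_child[OF False uV] by blast
    have fv: "\<not> tr v" using False te by simp
    obtain cv where cv: "(v,cv)\<in>E" "tr cv" using hyb_child[OF fv vV] by blast
    have "C cu = C cv" using C_hyb[OF False cu(1)] C_hyb[OF fv cv(1)] Ce by simp
    moreover have "cu \<in> V" "cv \<in> V" using cu cv Ein by auto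
    ultimately have "cu = cv" using R1 cu(2) cv(2) by blast
    then show ?thesis using par_unique[OF cu(2) cu(1)] cv(1) by simp
  qed
qed

lemma not_two_single: "\<not> two {a}" unfolding two_def by simp

lemma g_img: "(\<lambda>v. (C v, tr v)) ` V = Img K"
proof
  show "(\<lambda>v. (C v, tr v)) ` V \<subseteq> Img K"
  proof
    fix x assume "x \<in> (\<lambda>v. (C v, tr v)) ` V"
    then obtain v where v: "v\<in>V" "x = (C v, tr v)" by blast
    show "x \<in> Img K"
    proof (cases "tr v")
      case True then show ?thesis using v CK unfolding Img_def by simp
    next
      case False
      obtain c where c: "(v,c)\<in>E" "tr c" using hyb_child[OF False v(1)] by blast
      have "two (minsup K (C c))" using M2(2)[OF c(2) c(1) False] .
      moreover have "C c = C v" using C_hyb[OF False c(1)] .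
      ultimately show ?thesis using v False CK unfolding Img_def by simp
    qed
  qed
next
  show "Img K \<subseteq> (\<lambda>v. (C v, tr v)) ` V"
  proof
    fix x assume x: "x \<in> Img K"
    then obtain A b where xA: "x = (A,b)" "A \<in> K" and bb: "b \<or> two (minsup K A)"
      unfolding Img_def by auto
    from xA(2) obtain w0 where "w0\<in>V" "A = C w0" unfolding clusters_def by blast
    then obtain t where t: "t\<in>V" "tr t" "C t = A" using rep by metis
    show "x \<in> (\<lambda>v. (C v, tr v)) ` V"
    proof (cases b)
      case True
      then have "x = (\<lambda>v. (C v, tr v)) t" using xA t by simp
      then show ?thesis using t(1) by blast
    next
      case False
      then have two: "two (minsup K (C t))" using bb t by simp
      have "\<exists>h. (h,t)\<in>E \<and> \<not> tr h"
      proof (rule ccontr)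
        assume nh: "\<not> (\<exists>h. (h,t)\<in>E \<and> \<not> tr h)"
        show False
        proof (cases "\<exists>p. (p,t)\<in>E")
          case True
          then obtain p where p: "(p,t)\<in>E" by blast
          then have "tr p" using nh by blast
          then have "minsup K (C t) = {C p}" using M1[OF t(2) p] by simp
          then show False using two not_two_single by metis
        next
          case False
          then have "minsup K (C t) = {}" using M0[OF t(1)] by blast
          then show False using two unfolding two_def by simp
        qed
      qed
      then obtain h where h: "(h,t)\<in>E" "\<not> tr h" by blast
      have "C h = C t" using C_hyb[OF h(2) h(1)] by simp
      then have "x = (\<lambda>v. (C v, tr v)) h" using xA t h False by simp
      moreover have "h \<in> V" using h Ein by blast
      ultimately show ?thesis by blast
    qed
  qed
qed

lemma g_edge: assumes uV: "u\<in>V" and wV: "w\<in>V"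
  shows "(u,w)\<in>E \<longleftrightarrow> Rel K (C u, tr u) (C w, tr w)"
proof (cases "tr u")
  case tu: True
  show ?thesis
  proof (cases "tr w")
    case tw: True
    have "Rel K (C u, tr u) (C w, tr w) \<longleftrightarrow> minsup K (C w) = {C u}"
      unfolding Rel_def using tu tw by simp
    moreover have "(u,w)\<in>E \<longleftrightarrow> minsup K (C w) = {C u}"
    proof
      assume "(u,w)\<in>E" then show "minsup K (C w) = {C u}" using M1[OF tw _ tu] by simp
    next
      assume ms: "minsup K (C w) = {C u}"
      show "(u,w)\<in>E"
      proof (cases "\<exists>p. (p,w)\<in>E")
        case False
        then have "minsup K (C w) = {}" using M0[OF wV] by blast
        then show ?thesis using ms by simp
      next
        case True
        then obtain p where p: "(p,w)\<in>E" by blast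
        show ?thesis
        proof (cases "tr p")
          case True
          then have "{C p} = {C u}" using M1[OF tw p True] ms by simp
          then have "C p = C u" by simp
          moreover have "p\<in>V" using p Ein by blast
          ultimately have "p = u" using R1 True tu uV by blast
          then show ?thesis using p by simp
        next
          case False
          then have "two (minsup K (C w))" using M2(2)[OF tw p False] by simp
          then show ?thesis using ms not_two_single by metis
        qed
      qed
    qed
    ultimately show ?thesis by simp
  next
    case tw: False
    have "Rel K (C u, tr u) (C w, tr w) \<longleftrightarrow> C u \<in> minsup K (C w)"
      unfolding Rel_def using tu tw by simp
    moreover obtain c where c: "(w,c)\<in>E" "tr c" using hyb_child[OF tw wV] by blast
    moreover have "C c = C w" using C_hyb[OF tw c(1)] .
    moreover have ms: "minsup K (C c) = C ` {p. (p,w)\<in>E}" using M2(1)[OF c(2) c(1) tw] .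
    moreover have "(u,w)\<in>E \<longleftrightarrow> C u \<in> C ` {p. (p,w)\<in>E}"
    proof
      assume "(u,w)\<in>E" then show "C u \<in> C ` {p. (p,w)\<in>E}" by simp
    next
      assume "C u \<in> C ` {p. (p,w)\<in>E}"
      then obtain p where p: "(p,w)\<in>E" "C u = C p" by blast
      have "tr p" using hyb_parent_tree[OF p(1) tw] .
      moreover have "p\<in>V" using p Ein by blast
      ultimately have "u = p" using R1 tu uV p(2) by blast
      then show "(u,w)\<in>E" using p by simp
    qed
    ultimately show ?thesis by simp
  qed
next
  case tu: False
  show ?thesis
  proof (cases "tr w")
    case tw: True
    have "Rel K (C u, tr u) (C w, tr w) \<longleftrightarrow> C u = C w"
      unfolding Rel_def using tu tw by simp
    moreover have "(u,w)\<in>E \<longleftrightarrow> C u = C w"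
    proof
      assume "(u,w)\<in>E" then show "C u = C w" using C_hyb[OF tu] by simp
    next
      assume e: "C u = C w"
      obtain c where c: "(u,c)\<in>E" "tr c" using hyb_child[OF tu uV] by blast
      have "C c = C w" using C_hyb[OF tu c(1)] e by simp
      moreover have "c \<in> V" using c Ein by blast
      ultimately have "c = w" using R1 c(2) tw wV by blast
      then show "(u,w)\<in>E" using c by simp
    qed
    ultimately show ?thesis by simp
  next
    case tw: False
    have "\<not> Rel K (C u, tr u) (C w, tr w)" unfolding Rel_def using tu tw by simp
    moreover have "(u,w)\<notin>E" using hyb_parent_tree tu tw by blast
    ultimately show ?thesis by simp
  qed
qed

lemma g_leaf: "x \<in> leaves V E \<Longrightarrow> (C x, tr x) = ({lab x}, True)"
  using C_leaf leaf_tree by simp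

lemma leavesV: "leaves V E \<subseteq> V" unfolding leaves_def by blast

lemma labS: "bij_betw lab (leaves V E) S"
  using tcn unfolding tree_child_network_def labeled_in_def apply (elim conjE) by assumption

end

lemma iso_imp:
  assumes fin1: "finite V1" and EV1: "E1 \<subseteq> V1 \<times> V1" and fin2: "finite V2" and EV2: "E2 \<subseteq> V2 \<times> V2"
    and bij: "bij_betw f V1 V2" and edge: "\<forall>u\<in>V1. \<forall>w\<in>V1. (u,w)\<in>E1 \<longleftrightarrow> (f u, f w)\<in>E2"
    and lab: "\<forall>x\<in>leaves V1 E1. lab2 (f x) = lab1 x"
  shows "clusters V1 E1 lab1 = clusters V2 E2 lab2"
proof -
  define g where "g = inv_into V1 f"
  have inj: "inj_on f V1" and img: "f ` V1 = V2" using bij unfolding bij_betw_def by auto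
  have gf: "g (f u) = u" if "u\<in>V1" for u using inj that unfolding g_def by (simp add: inv_into_f_f)
  have fg: "f (g y) = y" "g y \<in> V1" if "y\<in>V2" for y
    using that img unfolding g_def by (auto simp: f_inv_into_f inv_into_into)
  have fw: "(f u, f w)\<in>E2\<^sup>* \<and> w \<in> V1" if "(u,w)\<in>E1\<^sup>*" "u\<in>V1" for u w
    using that(1)
  proof (induction rule: rtrancl_induct)
    case base then show ?case using that(2) by simp
  next
    case (step y z)
    then have "z \<in> V1" using EV1 by auto
    then have "(f y, f z)\<in>E2" using edge step by blast
    then show ?case using step \<open>z\<in>V1\<close> by (meson rtrancl.rtrancl_into_rtrancl)
  qed
  have bw: "(g a, g b)\<in>E1\<^sup>* \<and> b \<in> V2" if "(a,b)\<in>E2\<^sup>*" "a\<in>V2" for a b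
    using that(1)
  proof (induction rule: rtrancl_induct)
    case base then show ?case using that(2) by simp
  next
    case (step y z)
    then have zV: "z \<in> V2" using EV2 by auto
    have yV: "y \<in> V2" using step by blast
    have "(f (g y), f (g z))\<in>E2" using step fg zV yV by simp
    then have "(g y, g z)\<in>E1" using edge fg(2)[OF yV] fg(2)[OF zV] by blast
    then show ?case using step zV by (meson rtrancl.rtrancl_into_rtrancl)
  qed
  have reach: "(u,w)\<in>E1\<^sup>* \<longleftrightarrow> (f u, f w)\<in>E2\<^sup>*" if "u\<in>V1" "w\<in>V1" for u w
  proof
    assume "(u,w)\<in>E1\<^sup>*" then show "(f u, f w)\<in>E2\<^sup>*" using fw that by blast
  next
    assume "(f u, f w)\<in>E2\<^sup>*"
    moreover have "f u \<in> V2" using that img by blast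
    ultimately have "(g (f u), g (f w))\<in>E1\<^sup>*" using bw by blast
    then show "(u,w)\<in>E1\<^sup>*" using gf that by simp
  qed
  have leafeq: "x \<in> leaves V1 E1 \<longleftrightarrow> f x \<in> leaves V2 E2" if "x\<in>V1" for x
  proof -
    have "x \<in> leaves V1 E1 \<longleftrightarrow> (\<forall>w\<in>V1. (x,w)\<notin>E1)" using leaf_char[OF fin1] that by blast
    also have "\<dots> \<longleftrightarrow> (\<forall>w\<in>V1. (f x, f w)\<notin>E2)" using edge that by blast
    also have "\<dots> \<longleftrightarrow> (\<forall>w\<in>V2. (f x, w)\<notin>E2)" using img by blast
    also have "\<dots> \<longleftrightarrow> f x \<in> leaves V2 E2" using leaf_char[OF fin2] that img by blast
    finally show ?thesis .
  qed
  have L1: "leaves V1 E1 \<subseteq> V1" and L2: "leaves V2 E2 \<subseteq> V2" unfolding leaves_def by auto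
  have cl: "cluster V2 E2 lab2 (f v) = cluster V1 E1 lab1 v" if vV: "v\<in>V1" for v
  proof
    show "cluster V2 E2 lab2 (f v) \<subseteq> cluster V1 E1 lab1 v"
    proof
      fix l assume "l \<in> cluster V2 E2 lab2 (f v)"
      then obtain y where y: "y \<in> leaves V2 E2" "(f v, y)\<in>E2\<^sup>*" "l = lab2 y" unfolding cluster_def by blast
      have yV: "y \<in> V2" using y L2 by blast
      then obtain x where x: "x\<in>V1" "y = f x" using img by blast
      have "x \<in> leaves V1 E1" using leafeq x y by simp
      moreover have "(v,x)\<in>E1\<^sup>*" using reach vV x y by simp
      moreover have "l = lab1 x" using lab x y \<open>x \<in> leaves V1 E1\<close> by simp
      ultimately show "l \<in> cluster V1 E1 lab1 v" unfolding cluster_def by blast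
    qed
  next
    show "cluster V1 E1 lab1 v \<subseteq> cluster V2 E2 lab2 (f v)"
    proof
      fix l assume "l \<in> cluster V1 E1 lab1 v"
      then obtain x where x: "x \<in> leaves V1 E1" "(v, x)\<in>E1\<^sup>*" "l = lab1 x" unfolding cluster_def by blast
      have xV: "x\<in>V1" using x L1 by blast
      have "f x \<in> leaves V2 E2" using leafeq xV x by simp
      moreover have "(f v, f x)\<in>E2\<^sup>*" using reach vV xV x by simp
      moreover have "l = lab2 (f x)" using lab x by simp
      ultimately show "l \<in> cluster V2 E2 lab2 (f v)" unfolding cluster_def by blast
    qed
  qed
  have "clusters V2 E2 lab2 = cluster V2 E2 lab2 ` f ` V1" unfolding clusters_def using img by simp
  also have "\<dots> = cluster V1 E1 lab1 ` V1" using cl by (simp add: image_image)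
  finally show ?thesis unfolding clusters_def by simp
qed

theorem theorem8:
  fixes V1 :: "'v set" and E1 :: "('v \<times> 'v) set" and lab1 :: "'v \<Rightarrow> 'l"
    and V2 :: "'w set" and E2 :: "('w \<times> 'w) set" and lab2 :: "'w \<Rightarrow> 'l"
    and S :: "'l set"
  assumes "finite S"
    and "tree_child_network V1 E1 lab1 S" and "no_hybrid_parent_path V1 E1"
    and "tree_child_network V2 E2 lab2 S" and "no_hybrid_parent_path V2 E2"
  shows "labeled_iso V1 E1 lab1 V2 E2 lab2 \<longleftrightarrow> clusters V1 E1 lab1 = clusters V2 E2 lab2"
proof -
  interpret N1: tcn V1 E1 lab1 S using assms(2,3) by unfold_locales
  interpret N2: tcn V2 E2 lab2 S using assms(4,5) by unfold_locales
  show ?thesis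
  proof
    assume "labeled_iso V1 E1 lab1 V2 E2 lab2"
    then obtain f where f: "bij_betw f V1 V2" "\<forall>u\<in>V1. \<forall>w\<in>V1. (u,w)\<in>E1 \<longleftrightarrow> (f u, f w)\<in>E2"
      "\<forall>x\<in>leaves V1 E1. lab2 (f x) = lab1 x" unfolding labeled_iso_def by blast
    show "clusters V1 E1 lab1 = clusters V2 E2 lab2"
      by (rule iso_imp[OF N1.finV N1.EV N2.finV N2.EV f])
  next
    assume K: "clusters V1 E1 lab1 = clusters V2 E2 lab2"
    define g1 where "g1 = (\<lambda>v. (cluster V1 E1 lab1 v, tree_node V1 E1 v))"
    define g2 where "g2 = (\<lambda>v. (cluster V2 E2 lab2 v, tree_node V2 E2 v))"
    have b1: "bij_betw g1 V1 (Img (clusters V1 E1 lab1))"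
      unfolding bij_betw_def g1_def using N1.g_inj N1.g_img by simp
    have b2: "bij_betw g2 V2 (Img (clusters V1 E1 lab1))"
      unfolding bij_betw_def g2_def using N2.g_inj N2.g_img K by simp
    define f where "f = the_inv_into V2 g2 \<circ> g1"
    have bf: "bij_betw f V1 V2" unfolding f_def
      using bij_betw_trans[OF b1 bij_betw_the_inv_into[OF b2]] .
    have fV: "f u \<in> V2" if "u\<in>V1" for u using bf that bij_betwE by blast
    have gf: "g2 (f u) = g1 u" if "u\<in>V1" for u
    proof -
      have "g1 u \<in> g2 ` V2" using b1 b2 that unfolding bij_betw_def by blast
      moreover have "inj_on g2 V2" using b2 unfolding bij_betw_def by blast
      ultimately show ?thesis unfolding f_def using f_the_inv_into_f[of g2 V2 "g1 u"] by simp
    qed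
    have edges: "(u,w)\<in>E1 \<longleftrightarrow> (f u, f w)\<in>E2" if "u\<in>V1" "w\<in>V1" for u w
    proof -
      have "(u,w)\<in>E1 \<longleftrightarrow> Rel (clusters V1 E1 lab1) (g1 u) (g1 w)"
        using N1.g_edge that unfolding g1_def by simp
      also have "\<dots> \<longleftrightarrow> Rel (clusters V2 E2 lab2) (g2 (f u)) (g2 (f w))" using gf that K by simp
      also have "\<dots> \<longleftrightarrow> (f u, f w)\<in>E2" using N2.g_edge fV that unfolding g2_def by simp
      finally show ?thesis .
    qed
    have labs: "lab2 (f x) = lab1 x" if x: "x \<in> leaves V1 E1" for x
    proof -
      have xV: "x\<in>V1" using x N1.leavesV by blast
      have "lab1 x \<in> S" using N1.labS x bij_betwE by blast
      then obtain y where y: "y \<in> leaves V2 E2" "lab2 y = lab1 x"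
        using N2.labS unfolding bij_betw_def by force
      have yV: "y\<in>V2" using y N2.leavesV by blast
      have "g2 y = g1 x" unfolding g1_def g2_def using N1.g_leaf[OF x] N2.g_leaf[OF y(1)] y(2) by simp
      also have "\<dots> = g2 (f x)" using gf xV by simp
      finally have "y = f x" using N2.g_inj yV fV[OF xV] unfolding g2_def inj_on_def by blast
      then show ?thesis using y by simp
    qed
    show "labeled_iso V1 E1 lab1 V2 E2 lab2"
      unfolding labeled_iso_def using bf edges labs by blast
  qed
qed

end
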